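(* Let $(M,d)$ be a complete pointed metric space and $f\in\mathrm{Lip}_0(M,M)$. Then $\widehat f$ is a rigid operator on $\mathcal F(M)$ if and only if there exist an increasing sequence $(n(k))_k\subset\mathbb N$ and a constant $C\ge0$ such that $\mathrm{Lip}(f^{n(k)})\le C$ for all $k$ and $f^{n(k)}(x)\to x$ as $k\to\infty$ for all $x\in M$.
   Context: A pointed metric space is a metric space with a distinguished point $0$. $\mathrm{Lip}_0(M,M)$ denotes the Lipschitz maps $f:M\to M$ with $f(0)=0$, $\mathrm{Lip}(f)$ the least Lipschitz constant; $\mathrm{Lip}_0(M)$ the real-valued Lipschitz functions vanishing at $0$ normed by $\mathrm{Lip}$. $\delta:M\to\mathrm{Lip}_0(M)^*$, $\delta(x)(\varphi)=\varphi(x)$; $\mathcal F(M)$ is the norm-closed linear span of $\delta(M)$. $\widehat f$ is the unique bounded linear operator on $\mathcal F(M)$ with $\widehat f(\delta(x))=\delta(f(x))$. A bounded linear operator $T$ on a Banach space $X$ is rigid if there is an increasing sequence $(n(j))_j\subset\mathbb N$ with $T^{n(j)}x\to x$ for every $x\in X$. *)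

theory Defs
  imports "HOL-Analysis.Analysis"
begin

text \<open>Pointed metric space: a type of class metric_space together with a base point z.\<close>

definition Lip :: "('a::metric_space \<Rightarrow> 'b::metric_space) \<Rightarrow> real" where
  "Lip g = Inf {L. L-lipschitz_on UNIV g}"

definition Lip0_maps :: "'a::metric_space \<Rightarrow> ('a \<Rightarrow> 'a) set" where
  "Lip0_maps z = {g. g z = z \<and> (\<exists>L. L-lipschitz_on UNIV g)}"

definition Lip0 :: "'a::metric_space \<Rightarrow> ('a \<Rightarrow> real) set" where
  "Lip0 z = {\<phi>. \<phi> z = 0 \<and> (\<exists>L. L-lipschitz_on UNIV \<phi>)}"

text \<open>Functionals on Lip0 z are represented as functions on all of 'a => real that
  vanish outside Lip0 z (so that they are determined by their values on Lip0 z).\<close>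

definition dual_norm :: "'a::metric_space \<Rightarrow> (('a \<Rightarrow> real) \<Rightarrow> real) \<Rightarrow> real" where
  "dual_norm z \<Lambda> = Sup {\<bar>\<Lambda> \<phi>\<bar> | \<phi>. \<phi> \<in> Lip0 z \<and> Lip \<phi> \<le> 1}"

definition Lip0_dual :: "'a::metric_space \<Rightarrow> (('a \<Rightarrow> real) \<Rightarrow> real) set" where
  "Lip0_dual z = {\<Lambda>. (\<forall>\<phi>. \<phi> \<notin> Lip0 z \<longrightarrow> \<Lambda> \<phi> = 0)
     \<and> (\<forall>\<phi>\<in>Lip0 z. \<forall>\<psi>\<in>Lip0 z. \<forall>a b. \<Lambda> (\<lambda>x. a * \<phi> x + b * \<psi> x) = a * \<Lambda> \<phi> + b * \<Lambda> \<psi>)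
     \<and> (\<exists>B. \<forall>\<phi>\<in>Lip0 z. \<bar>\<Lambda> \<phi>\<bar> \<le> B * Lip \<phi>)}"

definition delta :: "'a::metric_space \<Rightarrow> 'a \<Rightarrow> (('a \<Rightarrow> real) \<Rightarrow> real)" where
  "delta z x = (\<lambda>\<phi>. if \<phi> \<in> Lip0 z then \<phi> x else 0)"

definition delta_span :: "'a::metric_space \<Rightarrow> (('a \<Rightarrow> real) \<Rightarrow> real) set" where
  "delta_span z = {\<mu>. \<exists>S a. finite S \<and> \<mu> = (\<lambda>\<phi>. \<Sum>x\<in>S. a x * delta z x \<phi>)}"

definition free_space :: "'a::metric_space \<Rightarrow> (('a \<Rightarrow> real) \<Rightarrow> real) set" where
  "free_space z = {\<Lambda> \<in> Lip0_dual z. \<forall>\<epsilon>>0. \<exists>\<mu>\<in>delta_span z.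
      dual_norm z (\<lambda>\<phi>. \<Lambda> \<phi> - \<mu> \<phi>) < \<epsilon>}"

text \<open>The linearization hat f: the unique bounded linear operator on F(M) with
  hat f (delta x) = delta (f x) (extended by 0 outside F(M), to make it unique
  as a HOL function).\<close>
definition hat :: "'a::metric_space \<Rightarrow> ('a \<Rightarrow> 'a) \<Rightarrow> (('a \<Rightarrow> real) \<Rightarrow> real) \<Rightarrow> (('a \<Rightarrow> real) \<Rightarrow> real)" where
  "hat z f = (THE T.
      (\<forall>\<Lambda>\<in>free_space z. T \<Lambda> \<in> free_space z)
    \<and> (\<forall>\<Lambda>\<in>free_space z. \<forall>\<Gamma>\<in>free_space z. \<forall>a b.
          T (\<lambda>\<phi>. a * \<Lambda> \<phi> + b * \<Gamma> \<phi>) = (\<lambda>\<phi>. a * T \<Lambda> \<phi> + b * T \<Gamma> \<phi>))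
    \<and> (\<exists>B. \<forall>\<Lambda>\<in>free_space z. dual_norm z (T \<Lambda>) \<le> B * dual_norm z \<Lambda>)
    \<and> (\<forall>x. T (delta z x) = delta z (f x))
    \<and> (\<forall>\<Lambda>. \<Lambda> \<notin> free_space z \<longrightarrow> T \<Lambda> = (\<lambda>\<phi>. 0)))"

definition rigid_on :: "'v set \<Rightarrow> ('v \<Rightarrow> 'v \<Rightarrow> real) \<Rightarrow> ('v \<Rightarrow> 'v) \<Rightarrow> bool" where
  "rigid_on X d T \<longleftrightarrow> (\<exists>n::nat \<Rightarrow> nat. strict_mono n \<and>
      (\<forall>x\<in>X. (\<lambda>j. d ((T ^^ n j) x) x) \<longlonglongrightarrow> 0))"

definition free_dist :: "'a::metric_space \<Rightarrow> (('a \<Rightarrow> real) \<Rightarrow> real) \<Rightarrow> (('a \<Rightarrow> real) \<Rightarrow> real) \<Rightarrow> real" where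
  "free_dist z \<Lambda> \<Gamma> = dual_norm z (\<lambda>\<phi>. \<Lambda> \<phi> - \<Gamma> \<phi>)"

end

theory Submission
  imports Defs
begin

lemma Lip_props:
  assumes "L-lipschitz_on UNIV g"
  shows "(Lip g)-lipschitz_on UNIV g" "Lip g \<le> L" "0 \<le> Lip g"
proof -
  let ?S = "{L. L-lipschitz_on UNIV g}"
  have ne: "?S \<noteq> {}" using assms by blast
  have bb: "bdd_below ?S" by (rule bdd_belowI[of _ 0]) (auto dest: lipschitz_on_nonneg)
  show "Lip g \<le> L" unfolding Lip_def using assms bb by (intro cInf_lower) auto
  show nn: "0 \<le> Lip g" unfolding Lip_def using ne by (intro cInf_greatest) (auto dest: lipschitz_on_nonneg)
  show "(Lip g)-lipschitz_on UNIV g"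
  proof (rule lipschitz_onI[OF _ nn])
    fix x y :: 'a
    show "dist (g x) (g y) \<le> Lip g * dist x y"
    proof (cases "x = y")
      case True then show ?thesis by simp
    next
      case False
      then have dp: "dist x y > 0" by simp
      have "dist (g x) (g y) / dist x y \<le> Lip g" unfolding Lip_def
      proof (rule cInf_greatest[OF ne])
        fix L' assume "L' \<in> ?S"
        then have "dist (g x) (g y) \<le> L' * dist x y" by (auto dest: lipschitz_onD)
        then show "dist (g x) (g y) / dist x y \<le> L'" using dp by (simp add: divide_le_eq)
      qed
      then show ?thesis using dp by (simp add: divide_le_eq)
    qed
  qed
qed

lemma Lip0_maps_funpow:
  assumes "f \<in> Lip0_maps z"
  shows "f ^^ n \<in> Lip0_maps z"
proof (induction n)
  case 0 then show ?case unfolding Lip0_maps_def by (auto intro: lipschitz_on_id[unfolded id_def] simp: id_def)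
next
  case (Suc n)
  from Suc obtain L where L: "L-lipschitz_on UNIV (f^^n)" "(f^^n) z = z" unfolding Lip0_maps_def by auto
  from assms obtain K where K: "K-lipschitz_on UNIV f" "f z = z" unfolding Lip0_maps_def by auto
  have "(K*L)-lipschitz_on UNIV (f \<circ> f^^n)"
    by (rule lipschitz_on_compose[OF L(1)]) (rule lipschitz_on_subset[OF K(1)], simp)
  then show ?case using L K unfolding Lip0_maps_def by auto
qed

lemma Lip0_comb:
  assumes "\<phi> \<in> Lip0 z" "\<psi> \<in> Lip0 z"
  shows "(\<lambda>x. a * \<phi> x + b * \<psi> x) \<in> Lip0 z"
proof -
  obtain L K where "L-lipschitz_on UNIV \<phi>" "K-lipschitz_on UNIV \<psi>" "\<phi> z = 0" "\<psi> z = 0"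
    using assms unfolding Lip0_def by auto
  then show ?thesis unfolding Lip0_def
    by (auto intro!: exI lipschitz_on_add lipschitz_on_cmult_real)
qed

lemma Lip0_comp:
  assumes "\<phi> \<in> Lip0 z" "g \<in> Lip0_maps z"
  shows "\<phi> \<circ> g \<in> Lip0 z" "Lip (\<phi> \<circ> g) \<le> Lip \<phi> * Lip g"
proof -
  obtain L K where L: "L-lipschitz_on UNIV \<phi>" "\<phi> z = 0" and K: "K-lipschitz_on UNIV g" "g z = z"
    using assms unfolding Lip0_def Lip0_maps_def by auto
  have "(Lip \<phi> * Lip g)-lipschitz_on UNIV (\<phi> \<circ> g)"
    by (rule lipschitz_on_compose[OF Lip_props(1)[OF K(1)]])
       (rule lipschitz_on_subset[OF Lip_props(1)[OF L(1)]], simp)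
  then show "\<phi> \<circ> g \<in> Lip0 z" "Lip (\<phi> \<circ> g) \<le> Lip \<phi> * Lip g"
    using L K unfolding Lip0_def by (auto intro: Lip_props)
qed

lemma Lip0_zero: "(\<lambda>x. 0) \<in> Lip0 z" "Lip (\<lambda>x::'a::metric_space. 0::real) = 0"
proof -
  have l: "0-lipschitz_on (UNIV::'a set) (\<lambda>x. 0::real)" by (rule lipschitz_on_constant)
  show "(\<lambda>x. 0) \<in> Lip0 z" unfolding Lip0_def using lipschitz_on_constant by auto
  show "Lip (\<lambda>x::'a::metric_space. 0::real) = 0"
    using Lip_props(2,3)[OF l] by simp
qed

lemma Lip0_dist:
  fixes z y :: "'a::metric_space"
  shows "(\<lambda>x. dist x y - dist z y) \<in> Lip0 z" "Lip (\<lambda>x. dist x y - dist z y) \<le> 1"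
proof -
  have "1-lipschitz_on UNIV (\<lambda>x. dist x y - dist z y)"
  proof (rule lipschitz_onI)
    fix a b :: 'a
    have "\<bar>dist a y - dist y b\<bar> \<le> dist a b" by (rule abs_dist_diff_le)
    then show "dist (dist a y - dist z y) (dist b y - dist z y) \<le> 1 * dist a b"
      by (simp add: dist_real_def dist_commute)
  qed simp
  then show "(\<lambda>x. dist x y - dist z y) \<in> Lip0 z" "Lip (\<lambda>x. dist x y - dist z y) \<le> 1"
    unfolding Lip0_def by (auto intro: Lip_props)
qed

lemma Lip0_bound:
  assumes "\<phi> \<in> Lip0 z"
  shows "\<bar>\<phi> x - \<phi> y\<bar> \<le> Lip \<phi> * dist x y" "0 \<le> Lip \<phi>"
proof -
  obtain L where "L-lipschitz_on UNIV \<phi>" using assms unfolding Lip0_def by auto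
  from Lip_props[OF this] show "\<bar>\<phi> x - \<phi> y\<bar> \<le> Lip \<phi> * dist x y" "0 \<le> Lip \<phi>"
    by (auto dest: lipschitz_onD simp: dist_real_def)
qed


lemma Lip0_zero':
  fixes z :: "'a::metric_space"
  shows "(\<lambda>x. 0) \<in> Lip0 z" "Lip (\<lambda>x::'a. 0::real) \<le> 1"
  using Lip0_zero(1)[of z] Lip0_zero(2)[where 'a='a] by auto

lemma dual_norm_le:
  assumes "\<And>\<phi>. \<phi> \<in> Lip0 z \<Longrightarrow> Lip \<phi> \<le> 1 \<Longrightarrow> \<bar>X \<phi>\<bar> \<le> B"
  shows "dual_norm z X \<le> B" "0 \<le> dual_norm z X"
    "\<And>\<phi>. \<phi> \<in> Lip0 z \<Longrightarrow> Lip \<phi> \<le> 1 \<Longrightarrow> \<bar>X \<phi>\<bar> \<le> dual_norm z X"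
proof -
  let ?S = "{\<bar>X \<phi>\<bar> | \<phi>. \<phi> \<in> Lip0 z \<and> Lip \<phi> \<le> 1}"
  have z0: "\<bar>X (\<lambda>x. 0)\<bar> \<in> ?S" using Lip0_zero'(1)[of z] Lip0_zero'(2)[where 'a='a] by blast
  then have ne: "?S \<noteq> {}" by blast
  have bdd: "bdd_above ?S" using assms by (auto intro!: bdd_aboveI[of _ B])
  show "dual_norm z X \<le> B" unfolding dual_norm_def using ne assms by (intro cSup_least) auto
  show u: "\<And>\<phi>. \<phi> \<in> Lip0 z \<Longrightarrow> Lip \<phi> \<le> 1 \<Longrightarrow> \<bar>X \<phi>\<bar> \<le> dual_norm z X"
    unfolding dual_norm_def using bdd by (intro cSup_upper) auto
  have "\<bar>X (\<lambda>x. 0)\<bar> \<le> dual_norm z X" using u[OF Lip0_zero'(1) Lip0_zero'(2)] .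
  then show "0 \<le> dual_norm z X" by linarith
qed

lemma dual_lin:
  assumes "\<Lambda> \<in> Lip0_dual z" "\<phi> \<in> Lip0 z" "\<psi> \<in> Lip0 z"
  shows "\<Lambda> (\<lambda>x. a * \<phi> x + b * \<psi> x) = a * \<Lambda> \<phi> + b * \<Lambda> \<psi>"
  using assms unfolding Lip0_dual_def by blast

lemma dual_scal:
  assumes "\<Lambda> \<in> Lip0_dual z" "\<phi> \<in> Lip0 z"
  shows "\<Lambda> (\<lambda>x. a * \<phi> x) = a * \<Lambda> \<phi>"
  using dual_lin[OF assms assms(2), of a 0] by simp

lemma dual_zero_fun:
  assumes "\<Lambda> \<in> Lip0_dual z"
  shows "\<Lambda> (\<lambda>x. 0) = 0"
  using dual_scal[OF assms Lip0_zero(1), of 0] by simp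

lemma dual_out:
  assumes "\<Lambda> \<in> Lip0_dual z" "\<phi> \<notin> Lip0 z"
  shows "\<Lambda> \<phi> = 0"
  using assms unfolding Lip0_dual_def by blast

lemma dual_bound:
  assumes "\<Lambda> \<in> Lip0_dual z" "\<phi> \<in> Lip0 z"
  shows "\<bar>\<Lambda> \<phi>\<bar> \<le> dual_norm z \<Lambda> * Lip \<phi>" "0 \<le> dual_norm z \<Lambda>"
proof -
  obtain B where B: "\<forall>\<phi>\<in>Lip0 z. \<bar>\<Lambda> \<phi>\<bar> \<le> B * Lip \<phi>" using assms(1) unfolding Lip0_dual_def by blast
  have unit: "\<bar>\<Lambda> \<psi>\<bar> \<le> \<bar>B\<bar>" if "\<psi> \<in> Lip0 z" "Lip \<psi> \<le> 1" for \<psi>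
  proof -
    have "0 \<le> Lip \<psi>" using Lip0_bound(2)[OF that(1)] .
    then have "B * Lip \<psi> \<le> \<bar>B\<bar> * Lip \<psi>" by (intro mult_right_mono) auto
    also have "\<dots> \<le> \<bar>B\<bar> * 1" using that(2) by (intro mult_left_mono) auto
    finally have "B * Lip \<psi> \<le> \<bar>B\<bar>" by simp
    then show ?thesis using B that(1) by (meson order_trans)
  qed
  note N = dual_norm_le[of z \<Lambda> "\<bar>B\<bar>", OF unit]
  show "0 \<le> dual_norm z \<Lambda>" using N(2) .
  obtain L where L: "L-lipschitz_on UNIV \<phi>" "\<phi> z = 0" using assms(2) unfolding Lip0_def by auto
  show "\<bar>\<Lambda> \<phi>\<bar> \<le> dual_norm z \<Lambda> * Lip \<phi>"
  proof (cases "Lip \<phi> = 0")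
    case True
    have "\<phi> x = 0" for x
    proof -
      have "dist (\<phi> x) (\<phi> z) \<le> Lip \<phi> * dist x z" using Lip_props(1)[OF L(1)] by (rule lipschitz_onD) auto
      then have "dist (\<phi> x) (\<phi> z) = 0" using True by (simp del: dist_eq_0_iff)
      then show ?thesis using L(2) by simp
    qed
    then have "\<phi> = (\<lambda>x. 0)" by auto
    then have "\<Lambda> \<phi> = 0" using dual_zero_fun[OF assms(1)] by simp
    then show ?thesis using True by simp
  next
    case False
    define c where "c = Lip \<phi>"
    have cp: "c > 0" using False Lip0_bound(2)[OF assms(2)] unfolding c_def by simp
    have l1: "(\<bar>1/c\<bar> * c)-lipschitz_on UNIV (\<lambda>x. (1/c) * \<phi> x)"
      by (rule lipschitz_on_cmult_real) (use Lip_props(1)[OF L(1)] c_def in simp)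
    have ps: "(\<lambda>x. (1/c) * \<phi> x) \<in> Lip0 z" using Lip0_comb[OF assms(2) assms(2), of "1/c" 0] by simp
    have "Lip (\<lambda>x. (1/c) * \<phi> x) \<le> 1" using Lip_props(2)[OF l1] cp by simp
    then have "\<bar>\<Lambda> (\<lambda>x. (1/c) * \<phi> x)\<bar> \<le> dual_norm z \<Lambda>" using N(3) ps by blast
    then have "\<bar>\<Lambda> \<phi>\<bar> / c \<le> dual_norm z \<Lambda>" using dual_scal[OF assms, of "1/c"] cp by (simp add: abs_mult)
    then show ?thesis using cp unfolding c_def[symmetric] by (simp add: divide_le_eq mult.commute)
  qed
qed

lemma dual_unit:
  assumes "\<Lambda> \<in> Lip0_dual z" "\<phi> \<in> Lip0 z" "Lip \<phi> \<le> 1"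
  shows "\<bar>\<Lambda> \<phi>\<bar> \<le> dual_norm z \<Lambda>"
proof -
  have "\<bar>\<Lambda> \<phi>\<bar> \<le> dual_norm z \<Lambda> * Lip \<phi>" by (rule dual_bound[OF assms(1,2)])
  also have "\<dots> \<le> dual_norm z \<Lambda> * 1" using dual_bound(2)[OF assms(1,2)] assms(3) by (intro mult_left_mono) auto
  finally show ?thesis by simp
qed

lemma dual_comb:
  assumes "\<Lambda> \<in> Lip0_dual z" "\<Gamma> \<in> Lip0_dual z"
  shows "(\<lambda>\<phi>. a * \<Lambda> \<phi> + b * \<Gamma> \<phi>) \<in> Lip0_dual z"
proof -
  have lin: "(\<lambda>\<phi>. a * \<Lambda> \<phi> + b * \<Gamma> \<phi>) (\<lambda>x. c * \<phi> x + d * \<psi> x)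
     = c * (\<lambda>\<phi>. a * \<Lambda> \<phi> + b * \<Gamma> \<phi>) \<phi> + d * (\<lambda>\<phi>. a * \<Lambda> \<phi> + b * \<Gamma> \<phi>) \<psi>"
    if "\<phi> \<in> Lip0 z" "\<psi> \<in> Lip0 z" for \<phi> \<psi> c d
    using dual_lin[OF assms(1) that] dual_lin[OF assms(2) that] by (simp add: algebra_simps)
  have bnd: "\<bar>a * \<Lambda> \<phi> + b * \<Gamma> \<phi>\<bar> \<le> (\<bar>a\<bar> * dual_norm z \<Lambda> + \<bar>b\<bar> * dual_norm z \<Gamma>) * Lip \<phi>"
    if "\<phi> \<in> Lip0 z" for \<phi>
  proof -
    have "\<bar>a * \<Lambda> \<phi> + b * \<Gamma> \<phi>\<bar> \<le> \<bar>a\<bar> * \<bar>\<Lambda> \<phi>\<bar> + \<bar>b\<bar> * \<bar>\<Gamma> \<phi>\<bar>"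
      by (metis abs_mult abs_triangle_ineq)
    also have "\<dots> \<le> \<bar>a\<bar> * (dual_norm z \<Lambda> * Lip \<phi>) + \<bar>b\<bar> * (dual_norm z \<Gamma> * Lip \<phi>)"
      using dual_bound(1)[OF assms(1) that] dual_bound(1)[OF assms(2) that]
      by (intro add_mono mult_left_mono) auto
    finally show ?thesis by (simp add: algebra_simps)
  qed
  have h1: "\<forall>\<phi>. \<phi> \<notin> Lip0 z \<longrightarrow> a * \<Lambda> \<phi> + b * \<Gamma> \<phi> = 0"
    using dual_out[OF assms(1)] dual_out[OF assms(2)] by simp
  have h2: "\<forall>\<phi>\<in>Lip0 z. \<forall>\<psi>\<in>Lip0 z. \<forall>c d. a * \<Lambda> (\<lambda>x. c * \<phi> x + d * \<psi> x) + b * \<Gamma> (\<lambda>x. c * \<phi> x + d * \<psi> x)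
     = c * (a * \<Lambda> \<phi> + b * \<Gamma> \<phi>) + d * (a * \<Lambda> \<psi> + b * \<Gamma> \<psi>)"
    using lin by simp
  have h3: "\<exists>B. \<forall>\<phi>\<in>Lip0 z. \<bar>a * \<Lambda> \<phi> + b * \<Gamma> \<phi>\<bar> \<le> B * Lip \<phi>"
    using bnd by blast
  show ?thesis unfolding Lip0_dual_def mem_Collect_eq
    using h1 h2 h3 by simp
qed

lemma dual_diff:
  assumes "\<Lambda> \<in> Lip0_dual z" "\<Gamma> \<in> Lip0_dual z"
  shows "(\<lambda>\<phi>. \<Lambda> \<phi> - \<Gamma> \<phi>) \<in> Lip0_dual z"
  using dual_comb[OF assms, of 1 "-1"] by simp

lemma dual_zero: "(\<lambda>\<phi>. 0) \<in> Lip0_dual z"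
  unfolding Lip0_dual_def by (auto intro!: exI[of _ 0])

lemma dual_norm_eq0:
  assumes "\<Lambda> \<in> Lip0_dual z" "dual_norm z \<Lambda> \<le> 0"
  shows "\<Lambda> = (\<lambda>\<phi>. 0)"
proof
  fix \<phi>
  show "\<Lambda> \<phi> = 0"
  proof (cases "\<phi> \<in> Lip0 z")
    case True
    have "\<bar>\<Lambda> \<phi>\<bar> \<le> dual_norm z \<Lambda> * Lip \<phi>" by (rule dual_bound[OF assms(1) True])
    also have "\<dots> \<le> 0" using assms(2) Lip0_bound(2)[OF True] by (simp add: mult_nonpos_nonneg)
    finally show ?thesis by simp
  qed (use dual_out[OF assms(1)] in auto)
qed

lemma fd_le:
  assumes "\<And>\<phi>. \<phi> \<in> Lip0 z \<Longrightarrow> Lip \<phi> \<le> 1 \<Longrightarrow> \<bar>\<Lambda> \<phi> - \<Gamma> \<phi>\<bar> \<le> B"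
  shows "free_dist z \<Lambda> \<Gamma> \<le> B"
  unfolding free_dist_def using dual_norm_le(1)[of z "\<lambda>\<phi>. \<Lambda> \<phi> - \<Gamma> \<phi>" B] assms by simp

lemma fd_bound:
  assumes "\<Lambda> \<in> Lip0_dual z" "\<Gamma> \<in> Lip0_dual z" "\<phi> \<in> Lip0 z"
  shows "\<bar>\<Lambda> \<phi> - \<Gamma> \<phi>\<bar> \<le> free_dist z \<Lambda> \<Gamma> * Lip \<phi>" "0 \<le> free_dist z \<Lambda> \<Gamma>"
  using dual_bound[OF dual_diff[OF assms(1,2)] assms(3)] unfolding free_dist_def by auto

lemma fd_unit:
  assumes "\<Lambda> \<in> Lip0_dual z" "\<Gamma> \<in> Lip0_dual z" "\<phi> \<in> Lip0 z" "Lip \<phi> \<le> 1"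
  shows "\<bar>\<Lambda> \<phi> - \<Gamma> \<phi>\<bar> \<le> free_dist z \<Lambda> \<Gamma>"
  using dual_unit[OF dual_diff[OF assms(1,2)] assms(3,4)] unfolding free_dist_def by auto

lemma fd_commute: "free_dist z \<Lambda> \<Gamma> = free_dist z \<Gamma> \<Lambda>"
  unfolding free_dist_def dual_norm_def by (simp add: abs_minus_commute)

lemma fd_triangle:
  assumes "\<Lambda> \<in> Lip0_dual z" "\<Gamma> \<in> Lip0_dual z" "\<Theta> \<in> Lip0_dual z"
  shows "free_dist z \<Lambda> \<Theta> \<le> free_dist z \<Lambda> \<Gamma> + free_dist z \<Gamma> \<Theta>"
proof (rule fd_le)
  fix \<phi> assume "\<phi> \<in> Lip0 z" "Lip \<phi> \<le> 1"
  then have "\<bar>\<Lambda> \<phi> - \<Gamma> \<phi>\<bar> \<le> free_dist z \<Lambda> \<Gamma>" "\<bar>\<Gamma> \<phi> - \<Theta> \<phi>\<bar> \<le> free_dist z \<Gamma> \<Theta>"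
    using fd_unit assms by blast+
  then show "\<bar>\<Lambda> \<phi> - \<Theta> \<phi>\<bar> \<le> free_dist z \<Lambda> \<Gamma> + free_dist z \<Gamma> \<Theta>" by linarith
qed

lemma fd_eq0:
  assumes "\<Lambda> \<in> Lip0_dual z" "\<Gamma> \<in> Lip0_dual z" "free_dist z \<Lambda> \<Gamma> \<le> 0"
  shows "\<Lambda> = \<Gamma>"
proof -
  have "(\<lambda>\<phi>. \<Lambda> \<phi> - \<Gamma> \<phi>) = (\<lambda>\<phi>. 0)"
    using dual_norm_eq0[OF dual_diff[OF assms(1,2)]] assms(3) unfolding free_dist_def by simp
  then have "\<And>\<phi>. \<Lambda> \<phi> - \<Gamma> \<phi> = 0" by (simp add: fun_eq_iff)
  then show ?thesis by (simp add: fun_eq_iff)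
qed

lemma fd_self: "free_dist z \<Lambda> \<Lambda> = 0"
proof -
  have "free_dist z \<Lambda> \<Lambda> \<le> 0" by (rule fd_le) simp
  moreover have "0 \<le> free_dist z \<Lambda> \<Lambda>" unfolding free_dist_def by (rule dual_norm_le(2)[of _ _ 0]) simp
  ultimately show ?thesis by simp
qed


lemma Lip0_dualI:
  assumes "\<And>\<phi>. \<phi> \<notin> Lip0 z \<Longrightarrow> \<Lambda> \<phi> = 0"
    "\<And>\<phi> \<psi> a b. \<phi> \<in> Lip0 z \<Longrightarrow> \<psi> \<in> Lip0 z \<Longrightarrow> \<Lambda> (\<lambda>x. a * \<phi> x + b * \<psi> x) = a * \<Lambda> \<phi> + b * \<Lambda> \<psi>"
    "\<And>\<phi>. \<phi> \<in> Lip0 z \<Longrightarrow> \<bar>\<Lambda> \<phi>\<bar> \<le> B * Lip \<phi>"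
  shows "\<Lambda> \<in> Lip0_dual z"
  unfolding Lip0_dual_def using assms by blast

lemma delta_dual: "delta z x \<in> Lip0_dual z"
proof -
  have h2: "delta z x (\<lambda>t. a * \<phi> t + b * \<psi> t) = a * delta z x \<phi> + b * delta z x \<psi>"
    if "\<phi> \<in> Lip0 z" "\<psi> \<in> Lip0 z" for \<phi> \<psi> a b
    using that Lip0_comb[OF that] unfolding delta_def by simp
  have h3: "\<bar>delta z x \<phi>\<bar> \<le> dist x z * Lip \<phi>" if "\<phi> \<in> Lip0 z" for \<phi>
  proof -
    have "\<phi> z = 0" using that unfolding Lip0_def by simp
    then show ?thesis using Lip0_bound(1)[OF that, of x z] that unfolding delta_def by (simp add: mult.commute)
  qed
  show ?thesis
    by (rule Lip0_dualI[OF _ h2 h3]) (simp add: delta_def)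
qed

lemma span_dual:
  assumes "finite S"
  shows "(\<lambda>\<phi>. \<Sum>x\<in>S. a x * delta z x \<phi>) \<in> Lip0_dual z"
proof -
  have h1: "\<forall>\<phi>. \<phi> \<notin> Lip0 z \<longrightarrow> (\<Sum>x\<in>S. a x * delta z x \<phi>) = 0"
    by (simp add: delta_def)
  have h2: "(\<Sum>x\<in>S. a x * delta z x (\<lambda>t. c * \<phi> t + d * \<psi> t)) = c * (\<Sum>x\<in>S. a x * delta z x \<phi>) + d * (\<Sum>x\<in>S. a x * delta z x \<psi>)"
    if "\<phi> \<in> Lip0 z" "\<psi> \<in> Lip0 z" for \<phi> \<psi> c d
    using dual_lin[OF delta_dual that] by (simp add: sum_distrib_left sum.distrib algebra_simps)
  have h3: "\<bar>\<Sum>x\<in>S. a x * delta z x \<phi>\<bar> \<le> (\<Sum>x\<in>S. \<bar>a x\<bar> * dual_norm z (delta z x)) * Lip \<phi>"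
    if "\<phi> \<in> Lip0 z" for \<phi>
  proof -
    have "\<bar>\<Sum>x\<in>S. a x * delta z x \<phi>\<bar> \<le> (\<Sum>x\<in>S. \<bar>a x * delta z x \<phi>\<bar>)" by (rule sum_abs)
    also have "\<dots> \<le> (\<Sum>x\<in>S. \<bar>a x\<bar> * dual_norm z (delta z x) * Lip \<phi>)"
    proof (rule sum_mono)
      fix x assume "x \<in> S"
      show "\<bar>a x * delta z x \<phi>\<bar> \<le> \<bar>a x\<bar> * dual_norm z (delta z x) * Lip \<phi>"
        using dual_bound(1)[OF delta_dual that, of x] by (simp add: abs_mult mult.assoc mult_left_mono)
    qed
    finally show ?thesis by (simp add: sum_distrib_right)
  qed
  show ?thesis
    by (rule Lip0_dualI[OF _ h2 h3]) (use h1 in simp)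
qed

lemma span_dual': "\<mu> \<in> delta_span z \<Longrightarrow> \<mu> \<in> Lip0_dual z"
  unfolding delta_span_def using span_dual by blast

lemma span_image:
  assumes "finite S"
  shows "(\<lambda>\<phi>. \<Sum>x\<in>S. a x * delta z (h x) \<phi>) \<in> delta_span z"
proof -
  define b where "b y = (\<Sum>x\<in>{x\<in>S. h x = y}. a x)" for y
  have "(\<Sum>x\<in>S. a x * delta z (h x) \<phi>) = (\<Sum>y\<in>h ` S. b y * delta z y \<phi>)" for \<phi>
  proof -
    have "(\<Sum>x\<in>S. a x * delta z (h x) \<phi>) = (\<Sum>y\<in>h ` S. \<Sum>x\<in>{x\<in>S. h x = y}. a x * delta z (h x) \<phi>)"
      by (rule sum.image_gen[OF assms])
    also have "\<dots> = (\<Sum>y\<in>h ` S. b y * delta z y \<phi>)"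
      unfolding b_def sum_distrib_right by (intro sum.cong refl) auto
    finally show ?thesis .
  qed
  then show ?thesis unfolding delta_span_def mem_Collect_eq using assms
    by (intro exI[of _ "h ` S"] exI[of _ b]) auto
qed

lemma delta_in_span: "delta z x \<in> delta_span z"
  unfolding delta_span_def mem_Collect_eq
  by (rule exI[of _ "{x}"], rule exI[of _ "\<lambda>_. 1"]) simp

lemma zero_in_span: "(\<lambda>\<phi>. 0) \<in> delta_span z"
  unfolding delta_span_def mem_Collect_eq
  by (rule exI[of _ "{}"], rule exI[of _ "\<lambda>_. 0"]) simp

lemma span_comb:
  assumes "\<mu> \<in> delta_span z" "\<nu> \<in> delta_span z"
  shows "(\<lambda>\<phi>. a * \<mu> \<phi> + b * \<nu> \<phi>) \<in> delta_span z"
proof -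
  obtain S c where S: "finite S" "\<mu> = (\<lambda>\<phi>. \<Sum>x\<in>S. c x * delta z x \<phi>)"
    using assms(1) unfolding delta_span_def by blast
  obtain T d where T: "finite T" "\<nu> = (\<lambda>\<phi>. \<Sum>x\<in>T. d x * delta z x \<phi>)"
    using assms(2) unfolding delta_span_def by blast
  define e where "e x = a * (if x \<in> S then c x else 0) + b * (if x \<in> T then d x else 0)" for x
  have "a * \<mu> \<phi> + b * \<nu> \<phi> = (\<Sum>x\<in>S \<union> T. e x * delta z x \<phi>)" for \<phi>
  proof -
    have 1: "(\<Sum>x\<in>S \<union> T. (if x \<in> S then c x else 0) * delta z x \<phi>) = (\<Sum>x\<in>S. c x * delta z x \<phi>)"
      using S(1) T(1) by (intro sum.mono_neutral_cong_right) auto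
    have 2: "(\<Sum>x\<in>S \<union> T. (if x \<in> T then d x else 0) * delta z x \<phi>) = (\<Sum>x\<in>T. d x * delta z x \<phi>)"
      using S(1) T(1) by (intro sum.mono_neutral_cong_right) auto
    have 3: "(\<Sum>x\<in>S \<union> T. e x * delta z x \<phi>) = a * (\<Sum>x\<in>S \<union> T. (if x \<in> S then c x else 0) * delta z x \<phi>)
       + b * (\<Sum>x\<in>S \<union> T. (if x \<in> T then d x else 0) * delta z x \<phi>)"
      unfolding e_def by (simp add: distrib_right sum.distrib sum_distrib_left mult.assoc)
    show ?thesis unfolding S(2) T(2) 3 1 2 by simp
  qed
  then show ?thesis unfolding delta_span_def mem_Collect_eq using S(1) T(1)
    by (intro exI[of _ "S \<union> T"] exI[of _ e]) auto
qed

lemma free_iff: "\<Lambda> \<in> free_space z \<longleftrightarrow> \<Lambda> \<in> Lip0_dual z \<and> (\<forall>\<epsilon>>0. \<exists>\<mu>\<in>delta_span z. free_dist z \<Lambda> \<mu> < \<epsilon>)"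
  unfolding free_space_def free_dist_def by simp

lemma free_dual: "\<Lambda> \<in> free_space z \<Longrightarrow> \<Lambda> \<in> Lip0_dual z"
  unfolding free_iff by simp

lemma span_free: "\<mu> \<in> delta_span z \<Longrightarrow> \<mu> \<in> free_space z"
  unfolding free_iff using span_dual' fd_self[of z \<mu>] by (metis less_numeral_extra(3))

lemma delta_free: "delta z x \<in> free_space z"
  by (rule span_free[OF delta_in_span])

lemma zero_free: "(\<lambda>\<phi>. 0) \<in> free_space z"
  by (rule span_free[OF zero_in_span])

lemma free_comb:
  assumes "\<Lambda> \<in> free_space z" "\<Gamma> \<in> free_space z"
  shows "(\<lambda>\<phi>. a * \<Lambda> \<phi> + b * \<Gamma> \<phi>) \<in> free_space z"
  unfolding free_iff
proof (intro conjI allI impI)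
  have L: "\<Lambda> \<in> Lip0_dual z" and G: "\<Gamma> \<in> Lip0_dual z" using assms free_dual by auto
  show "(\<lambda>\<phi>. a * \<Lambda> \<phi> + b * \<Gamma> \<phi>) \<in> Lip0_dual z" using dual_comb[OF L G] .
  fix \<epsilon> :: real assume e: "\<epsilon> > 0"
  define \<delta> where "\<delta> = \<epsilon> / (\<bar>a\<bar> + \<bar>b\<bar> + 1)"
  have dp: "\<delta> > 0" using e unfolding \<delta>_def by (simp add: add_pos_nonneg)
  obtain \<mu> where mu: "\<mu> \<in> delta_span z" "free_dist z \<Lambda> \<mu> < \<delta>" using assms(1) dp unfolding free_iff by blast
  obtain \<nu> where nu: "\<nu> \<in> delta_span z" "free_dist z \<Gamma> \<nu> < \<delta>" using assms(2) dp unfolding free_iff by blast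
  have M: "\<mu> \<in> Lip0_dual z" "\<nu> \<in> Lip0_dual z" using mu nu span_dual' by auto
  have "free_dist z (\<lambda>\<phi>. a * \<Lambda> \<phi> + b * \<Gamma> \<phi>) (\<lambda>\<phi>. a * \<mu> \<phi> + b * \<nu> \<phi>) \<le> (\<bar>a\<bar> + \<bar>b\<bar>) * \<delta>"
  proof (rule fd_le)
    fix \<phi> assume p: "\<phi> \<in> Lip0 z" "Lip \<phi> \<le> 1"
    have 1: "\<bar>\<Lambda> \<phi> - \<mu> \<phi>\<bar> \<le> \<delta>" using fd_unit[OF L M(1) p] mu(2) by linarith
    have 2: "\<bar>\<Gamma> \<phi> - \<nu> \<phi>\<bar> \<le> \<delta>" using fd_unit[OF G M(2) p] nu(2) by linarith
    have "\<bar>a * \<Lambda> \<phi> + b * \<Gamma> \<phi> - (a * \<mu> \<phi> + b * \<nu> \<phi>)\<bar> = \<bar>a * (\<Lambda> \<phi> - \<mu> \<phi>) + b * (\<Gamma> \<phi> - \<nu> \<phi>)\<bar>"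
      by (simp add: algebra_simps)
    also have "\<dots> \<le> \<bar>a\<bar> * \<bar>\<Lambda> \<phi> - \<mu> \<phi>\<bar> + \<bar>b\<bar> * \<bar>\<Gamma> \<phi> - \<nu> \<phi>\<bar>"
      by (metis abs_mult abs_triangle_ineq)
    also have "\<dots> \<le> \<bar>a\<bar> * \<delta> + \<bar>b\<bar> * \<delta>" using 1 2 by (intro add_mono mult_left_mono) auto
    finally show "\<bar>a * \<Lambda> \<phi> + b * \<Gamma> \<phi> - (a * \<mu> \<phi> + b * \<nu> \<phi>)\<bar> \<le> (\<bar>a\<bar> + \<bar>b\<bar>) * \<delta>"
      by (simp add: algebra_simps)
  qed
  also have "\<dots> < \<epsilon>" using e unfolding \<delta>_def by (simp add: field_simps)
  finally show "\<exists>\<mu>\<in>delta_span z. free_dist z (\<lambda>\<phi>. a * \<Lambda> \<phi> + b * \<Gamma> \<phi>) \<mu> < \<epsilon>"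
    using span_comb[OF mu(1) nu(1)] by blast
qed

lemma fd_delta:
  fixes z x y :: "'a::metric_space"
  shows "free_dist z (delta z x) (delta z y) = dist x y"
proof (rule antisym)
  show "free_dist z (delta z x) (delta z y) \<le> dist x y"
  proof (rule fd_le)
    fix \<phi> assume p: "\<phi> \<in> Lip0 z" "Lip \<phi> \<le> 1"
    have "\<bar>\<phi> x - \<phi> y\<bar> \<le> Lip \<phi> * dist x y" by (rule Lip0_bound(1)[OF p(1)])
    also have "\<dots> \<le> 1 * dist x y" using p(2) by (intro mult_right_mono) auto
    finally show "\<bar>delta z x \<phi> - delta z y \<phi>\<bar> \<le> dist x y" using p unfolding delta_def by simp
  next
  qed
  have "\<bar>delta z x (\<lambda>t. dist t y - dist z y) - delta z y (\<lambda>t. dist t y - dist z y)\<bar> \<le> free_dist z (delta z x) (delta z y)"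
    by (rule fd_unit[OF delta_dual delta_dual Lip0_dist])
  then show "dist x y \<le> free_dist z (delta z x) (delta z y)"
    using Lip0_dist(1)[of y z] unfolding delta_def by simp
qed


definition Pf :: "'a::metric_space \<Rightarrow> ('a \<Rightarrow> 'a) \<Rightarrow> (('a \<Rightarrow> real) \<Rightarrow> real) \<Rightarrow> (('a \<Rightarrow> real) \<Rightarrow> real)" where
  "Pf z g \<Lambda> = (\<lambda>\<phi>. if \<phi> \<in> Lip0 z then \<Lambda> (\<phi> \<circ> g) else 0)"

definition Hf :: "'a::metric_space \<Rightarrow> ('a \<Rightarrow> 'a) \<Rightarrow> (('a \<Rightarrow> real) \<Rightarrow> real) \<Rightarrow> (('a \<Rightarrow> real) \<Rightarrow> real)" where
  "Hf z g \<Lambda> = (if \<Lambda> \<in> free_space z then Pf z g \<Lambda> else (\<lambda>\<phi>. 0))"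

lemma Lip_map_nonneg: "g \<in> Lip0_maps z \<Longrightarrow> 0 \<le> Lip g"
  unfolding Lip0_maps_def using Lip_props(3) by blast

lemma Lip_comp_le:
  assumes "g \<in> Lip0_maps z" "\<phi> \<in> Lip0 z" "Lip \<phi> \<le> 1"
  shows "Lip (\<phi> \<circ> g) \<le> Lip g"
proof -
  have "Lip (\<phi> \<circ> g) \<le> Lip \<phi> * Lip g" by (rule Lip0_comp(2)[OF assms(2,1)])
  also have "\<dots> \<le> 1 * Lip g" using assms(3) Lip_map_nonneg[OF assms(1)] by (intro mult_right_mono) auto
  finally show ?thesis by simp
qed

lemma P_dual:
  assumes "g \<in> Lip0_maps z" "\<Lambda> \<in> Lip0_dual z"
  shows "Pf z g \<Lambda> \<in> Lip0_dual z"
proof (rule Lip0_dualI[where B = "dual_norm z \<Lambda> * Lip g"])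
  show "Pf z g \<Lambda> \<phi> = 0" if "\<phi> \<notin> Lip0 z" for \<phi> using that unfolding Pf_def by simp
  show "Pf z g \<Lambda> (\<lambda>x. a * \<phi> x + b * \<psi> x) = a * Pf z g \<Lambda> \<phi> + b * Pf z g \<Lambda> \<psi>"
    if "\<phi> \<in> Lip0 z" "\<psi> \<in> Lip0 z" for \<phi> \<psi> a b
  proof -
    have e: "(\<lambda>x. a * \<phi> x + b * \<psi> x) \<circ> g = (\<lambda>x. a * (\<phi> \<circ> g) x + b * (\<psi> \<circ> g) x)" by (simp add: o_def)
    show ?thesis unfolding Pf_def using that Lip0_comb[OF that] e
        dual_lin[OF assms(2) Lip0_comp(1)[OF that(1) assms(1)] Lip0_comp(1)[OF that(2) assms(1)]]
      by simp
  qed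
  show "\<bar>Pf z g \<Lambda> \<phi>\<bar> \<le> dual_norm z \<Lambda> * Lip g * Lip \<phi>" if "\<phi> \<in> Lip0 z" for \<phi>
  proof -
    have "\<bar>\<Lambda> (\<phi> \<circ> g)\<bar> \<le> dual_norm z \<Lambda> * Lip (\<phi> \<circ> g)"
      by (rule dual_bound(1)[OF assms(2) Lip0_comp(1)[OF that assms(1)]])
    also have "\<dots> \<le> dual_norm z \<Lambda> * (Lip \<phi> * Lip g)"
      using Lip0_comp(2)[OF that assms(1)] dual_bound(2)[OF assms(2) that] by (intro mult_left_mono)
    finally show ?thesis using that unfolding Pf_def by (simp add: algebra_simps)
  qed
qed

lemma P_fd:
  assumes "g \<in> Lip0_maps z" "\<Lambda> \<in> Lip0_dual z" "\<mu> \<in> Lip0_dual z"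
  shows "free_dist z (Pf z g \<Lambda>) (Pf z g \<mu>) \<le> Lip g * free_dist z \<Lambda> \<mu>"
proof (rule fd_le)
  fix \<phi> assume p: "\<phi> \<in> Lip0 z" "Lip \<phi> \<le> 1"
  have c: "\<phi> \<circ> g \<in> Lip0 z" by (rule Lip0_comp(1)[OF p(1) assms(1)])
  have "\<bar>\<Lambda> (\<phi> \<circ> g) - \<mu> (\<phi> \<circ> g)\<bar> \<le> free_dist z \<Lambda> \<mu> * Lip (\<phi> \<circ> g)"
    by (rule fd_bound(1)[OF assms(2,3) c])
  also have "\<dots> \<le> free_dist z \<Lambda> \<mu> * Lip g"
    using Lip_comp_le[OF assms(1) p] fd_bound(2)[OF assms(2,3) c] by (intro mult_left_mono)
  finally show "\<bar>Pf z g \<Lambda> \<phi> - Pf z g \<mu> \<phi>\<bar> \<le> Lip g * free_dist z \<Lambda> \<mu>"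
    using p unfolding Pf_def by (simp add: mult.commute)
qed

lemma P_span:
  assumes "g \<in> Lip0_maps z"
  shows "Pf z g (\<lambda>\<phi>. \<Sum>x\<in>S. a x * delta z x \<phi>) = (\<lambda>\<phi>. \<Sum>x\<in>S. a x * delta z (g x) \<phi>)"
proof
  fix \<phi>
  show "Pf z g (\<lambda>\<phi>. \<Sum>x\<in>S. a x * delta z x \<phi>) \<phi> = (\<Sum>x\<in>S. a x * delta z (g x) \<phi>)"
  proof (cases "\<phi> \<in> Lip0 z")
    case True
    then show ?thesis using Lip0_comp(1)[OF True assms] unfolding Pf_def delta_def by simp
  qed (simp add: Pf_def delta_def)
qed

lemma P_free:
  assumes "g \<in> Lip0_maps z" "\<Lambda> \<in> free_space z"
  shows "Pf z g \<Lambda> \<in> free_space z"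
  unfolding free_iff
proof (intro conjI allI impI)
  have L: "\<Lambda> \<in> Lip0_dual z" using free_dual[OF assms(2)] .
  show "Pf z g \<Lambda> \<in> Lip0_dual z" by (rule P_dual[OF assms(1) L])
  fix \<epsilon> :: real assume e: "\<epsilon> > 0"
  define \<delta> where "\<delta> = \<epsilon> / (Lip g + 1)"
  have lg: "0 \<le> Lip g" by (rule Lip_map_nonneg[OF assms(1)])
  have dp: "\<delta> > 0" using e lg unfolding \<delta>_def by simp
  obtain \<mu> where mu: "\<mu> \<in> delta_span z" "free_dist z \<Lambda> \<mu> < \<delta>" using assms(2) dp unfolding free_iff by blast
  obtain S a where S: "finite S" "\<mu> = (\<lambda>\<phi>. \<Sum>x\<in>S. a x * delta z x \<phi>)" using mu(1) unfolding delta_span_def by blast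
  have sp: "Pf z g \<mu> \<in> delta_span z" unfolding S(2) P_span[OF assms(1)] by (rule span_image[OF S(1)])
  have "free_dist z (Pf z g \<Lambda>) (Pf z g \<mu>) \<le> Lip g * free_dist z \<Lambda> \<mu>"
    by (rule P_fd[OF assms(1) L span_dual'[OF mu(1)]])
  also have "\<dots> \<le> Lip g * \<delta>" using mu(2) lg by (intro mult_left_mono) auto
  also have "\<dots> < \<epsilon>" using e lg unfolding \<delta>_def by (simp add: field_simps)
  finally show "\<exists>\<mu>\<in>delta_span z. free_dist z (Pf z g \<Lambda>) \<mu> < \<epsilon>" using sp by blast
qed

lemma Hf_hat:
  assumes g: "g \<in> Lip0_maps z"
  shows "hat z g = Hf z g"
  unfolding hat_def
proof (rule the_equality)
  let ?Q = "\<lambda>T. (\<forall>\<Lambda>\<in>free_space z. T \<Lambda> \<in> free_space z)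
    \<and> (\<forall>\<Lambda>\<in>free_space z. \<forall>\<Gamma>\<in>free_space z. \<forall>a b.
          T (\<lambda>\<phi>. a * \<Lambda> \<phi> + b * \<Gamma> \<phi>) = (\<lambda>\<phi>. a * T \<Lambda> \<phi> + b * T \<Gamma> \<phi>))
    \<and> (\<exists>B. \<forall>\<Lambda>\<in>free_space z. dual_norm z (T \<Lambda>) \<le> B * dual_norm z \<Lambda>)
    \<and> (\<forall>x. T (delta z x) = delta z (g x))
    \<and> (\<forall>\<Lambda>. \<Lambda> \<notin> free_space z \<longrightarrow> T \<Lambda> = (\<lambda>\<phi>. 0))"
  have lg: "0 \<le> Lip g" by (rule Lip_map_nonneg[OF g])
  have Hspan: "Hf z g (\<lambda>\<phi>. \<Sum>x\<in>S. a x * delta z x \<phi>) = (\<lambda>\<phi>. \<Sum>x\<in>S. a x * delta z (g x) \<phi>)"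
    if "finite S" for S a
  proof -
    have "(\<lambda>\<phi>. \<Sum>x\<in>S. a x * delta z x \<phi>) \<in> free_space z"
      by (rule span_free) (use that in \<open>auto simp: delta_span_def\<close>)
    then show ?thesis unfolding Hf_def using P_span[OF g] by simp
  qed
  show "?Q (Hf z g)"
  proof (intro conjI ballI allI impI)
    show "Hf z g \<Lambda> \<in> free_space z" if "\<Lambda> \<in> free_space z" for \<Lambda>
      using P_free[OF g that] that unfolding Hf_def by simp
    show "Hf z g (\<lambda>\<phi>. a * \<Lambda> \<phi> + b * \<Gamma> \<phi>) = (\<lambda>\<phi>. a * Hf z g \<Lambda> \<phi> + b * Hf z g \<Gamma> \<phi>)"
      if "\<Lambda> \<in> free_space z" "\<Gamma> \<in> free_space z" for \<Lambda> \<Gamma> a b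
      using that free_comb[OF that, of a b] unfolding Hf_def Pf_def by (auto simp: fun_eq_iff)
    show "\<exists>B. \<forall>\<Lambda>\<in>free_space z. dual_norm z (Hf z g \<Lambda>) \<le> B * dual_norm z \<Lambda>"
    proof (intro exI ballI)
      fix \<Lambda> assume L: "\<Lambda> \<in> free_space z"
      have LL: "\<Lambda> \<in> Lip0_dual z" by (rule free_dual[OF L])
      show "dual_norm z (Hf z g \<Lambda>) \<le> Lip g * dual_norm z \<Lambda>"
      proof (rule dual_norm_le(1))
        fix \<phi> assume p: "\<phi> \<in> Lip0 z" "Lip \<phi> \<le> 1"
        have c: "\<phi> \<circ> g \<in> Lip0 z" by (rule Lip0_comp(1)[OF p(1) g])
        have "\<bar>\<Lambda> (\<phi> \<circ> g)\<bar> \<le> dual_norm z \<Lambda> * Lip (\<phi> \<circ> g)" by (rule dual_bound(1)[OF LL c])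
        also have "\<dots> \<le> dual_norm z \<Lambda> * Lip g"
          using Lip_comp_le[OF g p] dual_bound(2)[OF LL c] by (intro mult_left_mono)
        finally show "\<bar>Hf z g \<Lambda> \<phi>\<bar> \<le> Lip g * dual_norm z \<Lambda>"
          using L p unfolding Hf_def Pf_def by (simp add: mult.commute)
      qed
    qed
    show "Hf z g (delta z x) = delta z (g x)" for x
      using Hspan[of "{x}" "\<lambda>_. 1"] by simp
    show "Hf z g \<Lambda> = (\<lambda>\<phi>. 0)" if "\<Lambda> \<notin> free_space z" for \<Lambda>
      using that unfolding Hf_def by simp
  qed
  fix T assume Q: "?Q T"
  then have T1: "\<And>\<Lambda>. \<Lambda> \<in> free_space z \<Longrightarrow> T \<Lambda> \<in> free_space z"
    and T2: "\<And>\<Lambda> \<Gamma> a b. \<Lambda> \<in> free_space z \<Longrightarrow> \<Gamma> \<in> free_space z \<Longrightarrow>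
          T (\<lambda>\<phi>. a * \<Lambda> \<phi> + b * \<Gamma> \<phi>) = (\<lambda>\<phi>. a * T \<Lambda> \<phi> + b * T \<Gamma> \<phi>)"
    and T4: "\<And>x. T (delta z x) = delta z (g x)"
    and T5: "\<And>\<Lambda>. \<Lambda> \<notin> free_space z \<Longrightarrow> T \<Lambda> = (\<lambda>\<phi>. 0)"
    by blast+
  obtain B where T3: "\<And>\<Lambda>. \<Lambda> \<in> free_space z \<Longrightarrow> dual_norm z (T \<Lambda>) \<le> B * dual_norm z \<Lambda>"
    using Q by blast
  have Tspan: "T (\<lambda>\<phi>. \<Sum>x\<in>S. a x * delta z x \<phi>) = (\<lambda>\<phi>. \<Sum>x\<in>S. a x * delta z (g x) \<phi>)"
    if "finite S" for S a
    using that
  proof (induction S rule: finite_induct)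
    case empty
    have "T (\<lambda>\<phi>. 0 * delta z z \<phi> + 0 * delta z z \<phi>) = (\<lambda>\<phi>. 0 * T (delta z z) \<phi> + 0 * T (delta z z) \<phi>)"
      by (rule T2[OF delta_free delta_free])
    then show ?case by simp
  next
    case (insert y F)
    let ?m = "\<lambda>\<phi>. \<Sum>x\<in>F. a x * delta z x \<phi>"
    have mf: "?m \<in> free_space z" by (rule span_free) (use insert(1) in \<open>auto simp: delta_span_def\<close>)
    have e: "(\<lambda>\<phi>. \<Sum>x\<in>insert y F. a x * delta z x \<phi>) = (\<lambda>\<phi>. 1 * ?m \<phi> + a y * delta z y \<phi>)"
      using insert(1,2) by (simp add: add.commute)
    show ?case unfolding e T2[OF mf delta_free] insert(3) T4 using insert(1,2) by (simp add: add.commute)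
  qed
  show "T = Hf z g"
  proof
    fix \<Lambda>
    show "T \<Lambda> = Hf z g \<Lambda>"
    proof (cases "\<Lambda> \<in> free_space z")
      case False
      then show ?thesis using T5 unfolding Hf_def by simp
    next
      case L: True
      have LL: "\<Lambda> \<in> Lip0_dual z" by (rule free_dual[OF L])
      have TL: "T \<Lambda> \<in> Lip0_dual z" by (rule free_dual[OF T1[OF L]])
      have HL: "Hf z g \<Lambda> \<in> Lip0_dual z" using P_dual[OF g LL] L unfolding Hf_def by simp
      have "free_dist z (T \<Lambda>) (Hf z g \<Lambda>) \<le> 0 + \<epsilon>" if e: "\<epsilon> > 0" for \<epsilon>
      proof -
        define \<delta> where "\<delta> = \<epsilon> / (\<bar>B\<bar> + Lip g + 1)"
        have dp: "\<delta> > 0" using e lg unfolding \<delta>_def by (simp add: add_nonneg_pos)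
        obtain \<mu> where mu: "\<mu> \<in> delta_span z" "free_dist z \<Lambda> \<mu> < \<delta>" using L dp unfolding free_iff by blast
        obtain S a where S: "finite S" "\<mu> = (\<lambda>\<phi>. \<Sum>x\<in>S. a x * delta z x \<phi>)" using mu(1) unfolding delta_span_def by blast
        have M: "\<mu> \<in> free_space z" by (rule span_free[OF mu(1)])
        have MM: "\<mu> \<in> Lip0_dual z" by (rule free_dual[OF M])
        have TH: "T \<mu> = Hf z g \<mu>" unfolding S(2) Tspan[OF S(1)] Hspan[OF S(1)] ..
        define Dl where "Dl = (\<lambda>\<phi>. 1 * \<Lambda> \<phi> + (-1) * \<mu> \<phi>)"
        have Df: "Dl \<in> free_space z" unfolding Dl_def by (rule free_comb[OF L M])
        have TD: "T Dl = (\<lambda>\<phi>. T \<Lambda> \<phi> - T \<mu> \<phi>)" unfolding Dl_def T2[OF L M] by simp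
        have ND: "dual_norm z Dl = free_dist z \<Lambda> \<mu>" unfolding Dl_def free_dist_def by simp
        have fdn: "0 \<le> free_dist z \<Lambda> \<mu>" by (rule fd_bound(2)[OF LL MM Lip0_zero(1)])
        have "dual_norm z (T Dl) \<le> B * dual_norm z Dl" by (rule T3[OF Df])
        also have "\<dots> \<le> \<bar>B\<bar> * \<delta>" unfolding ND using mu(2) fdn
          by (metis abs_ge_self abs_ge_zero less_eq_real_def mult_mono order_trans)
        finally have NTD: "dual_norm z (T Dl) \<le> \<bar>B\<bar> * \<delta>" .
        have "free_dist z (T \<Lambda>) (Hf z g \<Lambda>) \<le> \<bar>B\<bar> * \<delta> + Lip g * \<delta>"
        proof (rule fd_le)
          fix \<phi> assume p: "\<phi> \<in> Lip0 z" "Lip \<phi> \<le> 1"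
          have 1: "\<bar>T \<Lambda> \<phi> - T \<mu> \<phi>\<bar> \<le> \<bar>B\<bar> * \<delta>"
            using dual_unit[OF free_dual[OF T1[OF Df]] p] NTD unfolding TD by simp
          have "free_dist z (Pf z g \<mu>) (Pf z g \<Lambda>) \<le> Lip g * free_dist z \<mu> \<Lambda>" by (rule P_fd[OF g MM LL])
          also have "\<dots> \<le> Lip g * \<delta>" using mu(2) lg fd_commute[of z \<mu> \<Lambda>] by (intro mult_left_mono) auto
          finally have 2: "free_dist z (Hf z g \<mu>) (Hf z g \<Lambda>) \<le> Lip g * \<delta>" using L M unfolding Hf_def by simp
          have "\<bar>Hf z g \<mu> \<phi> - Hf z g \<Lambda> \<phi>\<bar> \<le> free_dist z (Hf z g \<mu>) (Hf z g \<Lambda>)"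
            by (rule fd_unit[OF _ HL p]) (use P_dual[OF g MM] M in \<open>simp add: Hf_def\<close>)
          with 1 2 TH show "\<bar>T \<Lambda> \<phi> - Hf z g \<Lambda> \<phi>\<bar> \<le> \<bar>B\<bar> * \<delta> + Lip g * \<delta>" by auto
        qed
        also have "\<dots> = (\<bar>B\<bar> + Lip g) * \<delta>" by (simp add: algebra_simps)
        also have "\<dots> \<le> (\<bar>B\<bar> + Lip g + 1) * \<delta>" using dp by (intro mult_right_mono) auto
        also have "\<dots> = \<epsilon>" unfolding \<delta>_def using lg by (simp add: add_nonneg_pos)
        finally show ?thesis by simp
      qed
      then have "free_dist z (T \<Lambda>) (Hf z g \<Lambda>) \<le> 0" by (rule field_le_epsilon)
      then show ?thesis by (rule fd_eq0[OF TL HL])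
    qed
  qed
qed

lemma Hf_zero:
  assumes "g \<in> Lip0_maps z"
  shows "Hf z g (\<lambda>\<phi>. 0) = (\<lambda>\<phi>. 0)"
  using zero_free unfolding Hf_def Pf_def by simp

lemma Hf_iter:
  assumes f: "f \<in> Lip0_maps z" and L: "\<Lambda> \<in> free_space z"
  shows "(Hf z f ^^ n) \<Lambda> = Hf z (f ^^ n) \<Lambda>"
proof (induction n)
  case 0
  have "\<Lambda> \<phi> = 0" if "\<phi> \<notin> Lip0 z" for \<phi> using dual_out[OF free_dual[OF L] that] .
  then show ?case using L unfolding Hf_def Pf_def by (auto simp: fun_eq_iff)
next
  case (Suc n)
  have fn: "f ^^ n \<in> Lip0_maps z" by (rule Lip0_maps_funpow[OF f])
  have fr: "Hf z (f ^^ n) \<Lambda> \<in> free_space z" using P_free[OF fn L] L unfolding Hf_def by simp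
  have "(Hf z f ^^ Suc n) \<Lambda> = Hf z f (Hf z (f ^^ n) \<Lambda>)" using Suc by simp
  also have "\<dots> = Hf z (f ^^ Suc n) \<Lambda>"
    using fr L Lip0_comp(1)[OF _ f] unfolding Hf_def Pf_def by (auto simp: fun_eq_iff o_assoc)
  finally show ?case .
qed


definition fdm :: "'a::metric_space \<Rightarrow> (('a \<Rightarrow> real) \<Rightarrow> real) \<Rightarrow> (('a \<Rightarrow> real) \<Rightarrow> real) \<Rightarrow> real" where
  "fdm z x y = max 0 (free_dist z x y)"

lemma fd_nonneg_free: "x \<in> free_space z \<Longrightarrow> y \<in> free_space z \<Longrightarrow> 0 \<le> free_dist z x y"
  using fd_bound(2)[OF free_dual free_dual Lip0_zero(1)] by blast

lemma fdm_eq: "x \<in> free_space z \<Longrightarrow> y \<in> free_space z \<Longrightarrow> fdm z x y = free_dist z x y"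
  unfolding fdm_def using fd_nonneg_free by (simp add: max_def)

lemma metric_free: "Metric_space (free_space z) (fdm z)"
proof
  show "0 \<le> fdm z x y" for x y unfolding fdm_def by simp
  show "fdm z x y = fdm z y x" for x y unfolding fdm_def using fd_commute by metis
  show "(fdm z x y = 0) = (x = y)" if "x \<in> free_space z" "y \<in> free_space z" for x y
    using fdm_eq[OF that] fd_eq0[OF free_dual[OF that(1)] free_dual[OF that(2)]] fd_self[of z x] by auto
  show "fdm z x w \<le> fdm z x y + fdm z y w"
    if "x \<in> free_space z" "y \<in> free_space z" "w \<in> free_space z" for x y w
    using fdm_eq[OF that(1,2)] fdm_eq[OF that(1,3)] fdm_eq[OF that(2,3)]
      fd_triangle[OF free_dual[OF that(1)] free_dual[OF that(2)] free_dual[OF that(3)]] by simp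
qed

lemma mcomplete_free: "Metric_space.mcomplete (free_space z) (fdm z)"
proof -
  interpret FS: Metric_space "free_space z" "fdm z" by (rule metric_free)
  show ?thesis unfolding FS.mcomplete_def
  proof (intro allI impI)
    fix \<sigma> assume MC: "FS.MCauchy \<sigma>"
    have inS: "\<And>n. \<sigma> n \<in> free_space z" using MC unfolding FS.MCauchy_def by auto
    have inD: "\<And>n. \<sigma> n \<in> Lip0_dual z" using inS free_dual by blast
    have C: "\<exists>N. \<forall>n n'. N \<le> n \<longrightarrow> N \<le> n' \<longrightarrow> free_dist z (\<sigma> n) (\<sigma> n') < \<epsilon>" if "\<epsilon> > 0" for \<epsilon>
      using MC that inS fdm_eq unfolding FS.MCauchy_def by metis
    have cau: "Cauchy (\<lambda>n. \<sigma> n \<phi>)" if p: "\<phi> \<in> Lip0 z" for \<phi>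
    proof (rule CauchyI)
      fix e :: real assume e: "e > 0"
      have lp: "0 \<le> Lip \<phi>" by (rule Lip0_bound(2)[OF p])
      obtain N where N: "\<forall>n n'. N \<le> n \<longrightarrow> N \<le> n' \<longrightarrow> free_dist z (\<sigma> n) (\<sigma> n') < e / (Lip \<phi> + 1)"
        using C[of "e / (Lip \<phi> + 1)"] e lp by (auto simp: add_nonneg_pos)
      show "\<exists>M. \<forall>m\<ge>M. \<forall>n\<ge>M. norm (\<sigma> m \<phi> - \<sigma> n \<phi>) < e"
      proof (intro exI allI impI)
        fix m n assume mn: "N \<le> m" "N \<le> n"
        have "\<bar>\<sigma> m \<phi> - \<sigma> n \<phi>\<bar> \<le> free_dist z (\<sigma> m) (\<sigma> n) * Lip \<phi>" by (rule fd_bound(1)[OF inD inD p])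
        also have "\<dots> \<le> e / (Lip \<phi> + 1) * Lip \<phi>" using N mn lp by (intro mult_right_mono) (auto simp: less_imp_le)
        also have "\<dots> < e" using e lp by (simp add: field_simps)
        finally show "norm (\<sigma> m \<phi> - \<sigma> n \<phi>) < e" by simp
      qed
    qed
    define \<Lambda> where "\<Lambda> = (\<lambda>\<phi>. if \<phi> \<in> Lip0 z then lim (\<lambda>n. \<sigma> n \<phi>) else 0)"
    have conv: "(\<lambda>n. \<sigma> n \<phi>) \<longlonglongrightarrow> \<Lambda> \<phi>" if "\<phi> \<in> Lip0 z" for \<phi>
      using cau[OF that] that unfolding \<Lambda>_def by (simp add: Cauchy_convergent_iff convergent_LIMSEQ_iff)
    have est: "\<exists>N. \<forall>n\<ge>N. \<forall>\<phi>\<in>Lip0 z. \<bar>\<sigma> n \<phi> - \<Lambda> \<phi>\<bar> \<le> \<epsilon> * Lip \<phi>" if e: "\<epsilon> > 0" for \<epsilon>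
    proof -
      obtain N where N: "\<forall>n n'. N \<le> n \<longrightarrow> N \<le> n' \<longrightarrow> free_dist z (\<sigma> n) (\<sigma> n') < \<epsilon>" using C e by blast
      have "\<bar>\<sigma> n \<phi> - \<Lambda> \<phi>\<bar> \<le> \<epsilon> * Lip \<phi>" if n: "n \<ge> N" and p: "\<phi> \<in> Lip0 z" for n \<phi>
      proof (rule LIMSEQ_le_const2)
        show "(\<lambda>m. \<bar>\<sigma> n \<phi> - \<sigma> m \<phi>\<bar>) \<longlonglongrightarrow> \<bar>\<sigma> n \<phi> - \<Lambda> \<phi>\<bar>"
          by (intro tendsto_intros conv[OF p])
        have "\<bar>\<sigma> n \<phi> - \<sigma> m \<phi>\<bar> \<le> \<epsilon> * Lip \<phi>" if "m \<ge> N" for m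
        proof -
          have "\<bar>\<sigma> n \<phi> - \<sigma> m \<phi>\<bar> \<le> free_dist z (\<sigma> n) (\<sigma> m) * Lip \<phi>" by (rule fd_bound(1)[OF inD inD p])
          also have "\<dots> \<le> \<epsilon> * Lip \<phi>" using N n that Lip0_bound(2)[OF p] by (intro mult_right_mono) (auto simp: less_imp_le)
          finally show ?thesis .
        qed
        then show "\<exists>N. \<forall>m\<ge>N. \<bar>\<sigma> n \<phi> - \<sigma> m \<phi>\<bar> \<le> \<epsilon> * Lip \<phi>" by blast
      qed
      then show ?thesis by blast
    qed
    have LD: "\<Lambda> \<in> Lip0_dual z"
    proof -
      obtain N where N: "\<forall>n\<ge>N. \<forall>\<phi>\<in>Lip0 z. \<bar>\<sigma> n \<phi> - \<Lambda> \<phi>\<bar> \<le> 1 * Lip \<phi>" using est[of 1] by auto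
      show ?thesis
      proof (rule Lip0_dualI[where B = "dual_norm z (\<sigma> N) + 1"])
        show "\<Lambda> \<phi> = 0" if "\<phi> \<notin> Lip0 z" for \<phi> using that unfolding \<Lambda>_def by simp
        show "\<Lambda> (\<lambda>x. a * \<phi> x + b * \<psi> x) = a * \<Lambda> \<phi> + b * \<Lambda> \<psi>"
          if p: "\<phi> \<in> Lip0 z" "\<psi> \<in> Lip0 z" for \<phi> \<psi> a b
        proof (rule LIMSEQ_unique)
          show "(\<lambda>n. \<sigma> n (\<lambda>x. a * \<phi> x + b * \<psi> x)) \<longlonglongrightarrow> \<Lambda> (\<lambda>x. a * \<phi> x + b * \<psi> x)"
            by (rule conv[OF Lip0_comb[OF p]])
          have "(\<lambda>n. a * \<sigma> n \<phi> + b * \<sigma> n \<psi>) \<longlonglongrightarrow> a * \<Lambda> \<phi> + b * \<Lambda> \<psi>"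
            by (intro tendsto_intros conv p)
          then show "(\<lambda>n. \<sigma> n (\<lambda>x. a * \<phi> x + b * \<psi> x)) \<longlonglongrightarrow> a * \<Lambda> \<phi> + b * \<Lambda> \<psi>"
            using dual_lin[OF inD p] by simp
        qed
        show "\<bar>\<Lambda> \<phi>\<bar> \<le> (dual_norm z (\<sigma> N) + 1) * Lip \<phi>" if p: "\<phi> \<in> Lip0 z" for \<phi>
        proof -
          have "\<bar>\<sigma> N \<phi> - \<Lambda> \<phi>\<bar> \<le> 1 * Lip \<phi>" using N p by blast
          moreover have "\<bar>\<sigma> N \<phi>\<bar> \<le> dual_norm z (\<sigma> N) * Lip \<phi>" by (rule dual_bound(1)[OF inD p])
          ultimately show ?thesis by (simp add: algebra_simps)
        qed
      qed
    qed
    have fdest: "\<exists>N. \<forall>n\<ge>N. free_dist z (\<sigma> n) \<Lambda> \<le> \<epsilon>" if e: "\<epsilon> > 0" for \<epsilon>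
    proof -
      obtain N where N: "\<forall>n\<ge>N. \<forall>\<phi>\<in>Lip0 z. \<bar>\<sigma> n \<phi> - \<Lambda> \<phi>\<bar> \<le> \<epsilon> * Lip \<phi>" using est[OF e] by auto
      have "free_dist z (\<sigma> n) \<Lambda> \<le> \<epsilon>" if n: "n \<ge> N" for n
      proof (rule fd_le)
        fix \<phi> assume p: "\<phi> \<in> Lip0 z" "Lip \<phi> \<le> 1"
        have "\<bar>\<sigma> n \<phi> - \<Lambda> \<phi>\<bar> \<le> \<epsilon> * Lip \<phi>" using N n p by blast
        also have "\<dots> \<le> \<epsilon> * 1" using p e by (intro mult_left_mono) auto
        finally show "\<bar>\<sigma> n \<phi> - \<Lambda> \<phi>\<bar> \<le> \<epsilon>" by simp
      qed
      then show ?thesis by blast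
    qed
    have LF: "\<Lambda> \<in> free_space z" unfolding free_iff
    proof (intro conjI allI impI LD)
      fix \<epsilon> :: real assume e: "\<epsilon> > 0"
      obtain N where N: "\<forall>n\<ge>N. free_dist z (\<sigma> n) \<Lambda> \<le> \<epsilon>/3" using fdest[of "\<epsilon>/3"] e by auto
      obtain \<mu> where mu: "\<mu> \<in> delta_span z" "free_dist z (\<sigma> N) \<mu> < \<epsilon>/3"
        using inS[of N] e unfolding free_iff by (meson divide_pos_pos zero_less_numeral)
      have "free_dist z \<Lambda> \<mu> \<le> free_dist z \<Lambda> (\<sigma> N) + free_dist z (\<sigma> N) \<mu>"
        by (rule fd_triangle[OF LD inD span_dual'[OF mu(1)]])
      also have "\<dots> < \<epsilon>" using N mu(2) fd_commute[of z \<Lambda> "\<sigma> N"] e by auto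
      finally show "\<exists>\<mu>\<in>delta_span z. free_dist z \<Lambda> \<mu> < \<epsilon>" using mu(1) by blast
    qed
    show "\<exists>x. limitin FS.mtopology \<sigma> x sequentially"
    proof (intro exI)
      show "limitin FS.mtopology \<sigma> \<Lambda> sequentially"
        unfolding FS.limit_metric_sequentially
      proof (intro conjI allI impI LF)
        fix \<epsilon> :: real assume e: "\<epsilon> > 0"
        obtain N where N: "\<forall>n\<ge>N. free_dist z (\<sigma> n) \<Lambda> \<le> \<epsilon>/2" using fdest[of "\<epsilon>/2"] e by auto
        show "\<exists>N. \<forall>n\<ge>N. \<sigma> n \<in> free_space z \<and> fdm z (\<sigma> n) \<Lambda> < \<epsilon>"
        proof (intro exI allI impI conjI inS)
          fix n assume "n \<ge> N"
          then have "free_dist z (\<sigma> n) \<Lambda> \<le> \<epsilon>/2" using N by blast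
          then show "fdm z (\<sigma> n) \<Lambda> < \<epsilon>" using fdm_eq[OF inS LF] e by simp
        qed
      qed
    qed
  qed
qed


lemma hat_iter:
  assumes f: "f \<in> Lip0_maps z" and L: "\<Lambda> \<in> free_space z"
  shows "(hat z f ^^ n) \<Lambda> = Pf z (f ^^ n) \<Lambda>"
  using Hf_iter[OF f L, of n] L unfolding Hf_hat[OF f] Hf_def by simp

lemma P_delta:
  assumes "g \<in> Lip0_maps z"
  shows "Pf z g (delta z x) = delta z (g x)"
  using P_span[OF assms, where S="{x}" and a="\<lambda>_. 1"] by simp

lemma rigid_if:
  assumes f: "f \<in> Lip0_maps z" and n: "strict_mono n" and C: "C \<ge> 0"
    and LC: "\<And>k. Lip (f ^^ n k) \<le> C" and pw: "\<And>x. (\<lambda>k. (f ^^ n k) x) \<longlonglongrightarrow> x"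
  shows "rigid_on (free_space z) (free_dist z) (hat z f)"
  unfolding rigid_on_def
proof (intro exI conjI ballI)
  show "strict_mono n" by (rule n)
  fix \<Lambda> assume L: "\<Lambda> \<in> free_space z"
  have LL: "\<Lambda> \<in> Lip0_dual z" by (rule free_dual[OF L])
  define g where "g k = f ^^ n k" for k
  have g: "g k \<in> Lip0_maps z" for k unfolding g_def by (rule Lip0_maps_funpow[OF f])
  have eq: "(\<lambda>j. free_dist z ((hat z f ^^ n j) \<Lambda>) \<Lambda>) = (\<lambda>j. free_dist z (Pf z (g j) \<Lambda>) \<Lambda>)"
    using hat_iter[OF f L] unfolding g_def by simp
  show "(\<lambda>j. free_dist z ((hat z f ^^ n j) \<Lambda>) \<Lambda>) \<longlonglongrightarrow> 0"
    unfolding eq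
  proof (rule LIMSEQ_I)
    fix r :: real assume r: "r > 0"
    define \<delta> where "\<delta> = r / (2 * (C + 2))"
    have dp: "\<delta> > 0" using r C unfolding \<delta>_def by simp
    obtain \<mu> where mu: "\<mu> \<in> delta_span z" "free_dist z \<Lambda> \<mu> < \<delta>" using L dp unfolding free_iff by blast
    obtain S a where S: "finite S" "\<mu> = (\<lambda>\<phi>. \<Sum>x\<in>S. a x * delta z x \<phi>)" using mu(1) unfolding delta_span_def by blast
    have MM: "\<mu> \<in> Lip0_dual z" by (rule span_dual'[OF mu(1)])
    define s where "s j = (\<Sum>x\<in>S. \<bar>a x\<bar> * dist (g j x) x)" for j
    have dx: "(\<lambda>j. dist (g j x) x) \<longlonglongrightarrow> 0" for x
      using tendsto_dist_iff[THEN iffD1, OF pw[of x]] unfolding g_def .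
    have "(\<lambda>j. \<Sum>x\<in>S. \<bar>a x\<bar> * dist (g j x) x) \<longlonglongrightarrow> (\<Sum>x\<in>S. \<bar>a x\<bar> * 0)"
      by (rule tendsto_sum, rule tendsto_mult_left, rule dx)
    then have "s \<longlonglongrightarrow> 0" unfolding s_def[abs_def] by simp
    from LIMSEQ_D[OF this, of "r/2"] r obtain no where no0: "\<forall>j\<ge>no. norm (s j - 0) < r/2" by auto
    have no: "\<forall>j\<ge>no. s j < r/2"
    proof (intro allI impI)
      fix j assume "j \<ge> no"
      then have "norm (s j - 0) < r/2" using no0 by blast
      then show "s j < r/2" by simp
    qed
    show "\<exists>no. \<forall>j\<ge>no. norm (free_dist z (Pf z (g j) \<Lambda>) \<Lambda> - 0) < r"
    proof (intro exI allI impI)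
      fix j assume j: "j \<ge> no"
      have PD: "Pf z (g j) \<Lambda> \<in> Lip0_dual z" by (rule P_dual[OF g LL])
      have "free_dist z (Pf z (g j) \<Lambda>) \<Lambda> \<le> (C + 1) * \<delta> + s j"
      proof (rule fd_le)
        fix \<phi> assume p: "\<phi> \<in> Lip0 z" "Lip \<phi> \<le> 1"
        have c: "\<phi> \<circ> g j \<in> Lip0 z" by (rule Lip0_comp(1)[OF p(1) g])
        have 1: "\<bar>\<Lambda> (\<phi> \<circ> g j) - \<mu> (\<phi> \<circ> g j)\<bar> \<le> \<delta> * C"
        proof -
          have "\<bar>\<Lambda> (\<phi> \<circ> g j) - \<mu> (\<phi> \<circ> g j)\<bar> \<le> free_dist z \<Lambda> \<mu> * Lip (\<phi> \<circ> g j)"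
            by (rule fd_bound(1)[OF LL MM c])
          also have "\<dots> \<le> \<delta> * C"
          proof -
            have lc: "Lip (\<phi> \<circ> g j) \<le> C"
              using order_trans[OF Lip_comp_le[OF g p] LC[of j, folded g_def]] .
            show ?thesis using mu(2) lc fd_bound(2)[OF LL MM c] Lip0_bound(2)[OF c] dp
              by (intro mult_mono) auto
          qed
          finally show ?thesis .
        qed
        have 2: "\<bar>\<mu> (\<phi> \<circ> g j) - \<mu> \<phi>\<bar> \<le> s j"
        proof -
          have "\<mu> (\<phi> \<circ> g j) - \<mu> \<phi> = (\<Sum>x\<in>S. a x * (\<phi> (g j x) - \<phi> x))"
            using c p unfolding S(2) delta_def by (simp add: sum_subtractf algebra_simps)
          also have "\<bar>\<dots>\<bar> \<le> (\<Sum>x\<in>S. \<bar>a x * (\<phi> (g j x) - \<phi> x)\<bar>)" by (rule sum_abs)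
          also have "\<dots> \<le> s j" unfolding s_def
          proof (rule sum_mono)
            fix x
            have "\<bar>\<phi> (g j x) - \<phi> x\<bar> \<le> Lip \<phi> * dist (g j x) x" by (rule Lip0_bound(1)[OF p(1)])
            also have "\<dots> \<le> 1 * dist (g j x) x" using p(2) by (intro mult_right_mono) auto
            finally show "\<bar>a x * (\<phi> (g j x) - \<phi> x)\<bar> \<le> \<bar>a x\<bar> * dist (g j x) x"
              by (simp add: abs_mult mult_left_mono)
          qed
          finally show ?thesis .
        qed
        have 3: "\<bar>\<mu> \<phi> - \<Lambda> \<phi>\<bar> \<le> \<delta>"
          using fd_unit[OF MM LL p] fd_commute[of z \<mu> \<Lambda>] mu(2) by simp
        have "\<bar>Pf z (g j) \<Lambda> \<phi> - \<Lambda> \<phi>\<bar> = \<bar>\<Lambda> (\<phi> \<circ> g j) - \<Lambda> \<phi>\<bar>" using p unfolding Pf_def by simp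
        also have "\<dots> \<le> \<delta> * C + s j + \<delta>" using 1 2 3 by linarith
        finally show "\<bar>Pf z (g j) \<Lambda> \<phi> - \<Lambda> \<phi>\<bar> \<le> (C + 1) * \<delta> + s j" by (simp add: algebra_simps)
      qed
      also have "\<dots> < r/2 + r/2"
      proof -
        have "(C + 1) * \<delta> < r / 2" unfolding \<delta>_def using r C by (simp add: field_simps)
        moreover have "s j < r/2" using no j by blast
        ultimately show ?thesis by linarith
      qed
      finally have "free_dist z (Pf z (g j) \<Lambda>) \<Lambda> < r" by simp
      moreover have "0 \<le> free_dist z (Pf z (g j) \<Lambda>) \<Lambda>" by (rule fd_bound(2)[OF PD LL Lip0_zero(1)])
      ultimately show "norm (free_dist z (Pf z (g j) \<Lambda>) \<Lambda> - 0) < r" by simp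
    qed
  qed
qed


lemma rigid_pointwise:
  assumes f: "f \<in> Lip0_maps z"
    and conv: "\<forall>\<Lambda>\<in>free_space z. (\<lambda>j. free_dist z ((hat z f ^^ n j) \<Lambda>) \<Lambda>) \<longlonglongrightarrow> 0"
  shows "(\<lambda>k. (f ^^ n k) x) \<longlonglongrightarrow> x"
proof -
  have "(\<lambda>j. free_dist z ((hat z f ^^ n j) (delta z x)) (delta z x)) \<longlonglongrightarrow> 0"
    using conv delta_free by blast
  moreover have "free_dist z ((hat z f ^^ n j) (delta z x)) (delta z x) = dist ((f ^^ n j) x) x" for j
    unfolding hat_iter[OF f delta_free] P_delta[OF Lip0_maps_funpow[OF f]] fd_delta ..
  ultimately have "(\<lambda>j. dist ((f ^^ n j) x) x) \<longlonglongrightarrow> 0" by simp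
  then show ?thesis by (rule tendsto_dist_iff[THEN iffD2])
qed

lemma rigid_bound:
  assumes f: "f \<in> Lip0_maps z"
    and conv: "\<forall>\<Lambda>\<in>free_space z. (\<lambda>j. free_dist z ((hat z f ^^ n j) \<Lambda>) \<Lambda>) \<longlonglongrightarrow> 0"
  shows "\<exists>C\<ge>0. \<forall>k. Lip (f ^^ n k) \<le> C"
proof -
  interpret FS: Metric_space "free_space z" "fdm z" by (rule metric_free)
  define g where "g k = f ^^ n k" for k
  have g: "g k \<in> Lip0_maps z" for k unfolding g_def by (rule Lip0_maps_funpow[OF f])
  have conv': "(\<lambda>j. free_dist z (Pf z (g j) \<Lambda>) \<Lambda>) \<longlonglongrightarrow> 0" if L: "\<Lambda> \<in> free_space z" for \<Lambda>
  proof -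
    have "(\<lambda>j. free_dist z ((hat z f ^^ n j) \<Lambda>) \<Lambda>) \<longlonglongrightarrow> 0" using conv L by blast
    then show ?thesis unfolding hat_iter[OF f L] g_def .
  qed
  define E where "E m = {\<Lambda> \<in> free_space z. \<forall>j. \<forall>\<phi>\<in>Lip0 z. Lip \<phi> \<le> 1 \<longrightarrow> \<bar>\<Lambda> (\<phi> \<circ> g j)\<bar> \<le> real m}" for m :: nat
  have closed: "closedin FS.mtopology (E m)" for m
    unfolding FS.metric_closedin_iff_sequentially_closed
  proof (intro conjI allI impI)
    show "E m \<subseteq> free_space z" unfolding E_def by auto
    fix \<sigma> l assume H: "range \<sigma> \<subseteq> E m \<and> limitin FS.mtopology \<sigma> l sequentially"
    then have sE: "\<sigma> k \<in> E m" for k by auto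
    have sF: "\<sigma> k \<in> free_space z" for k using sE unfolding E_def by auto
    have lF: "l \<in> free_space z" and lim: "\<And>\<epsilon>. \<epsilon> > 0 \<Longrightarrow> \<exists>N. \<forall>k\<ge>N. \<sigma> k \<in> free_space z \<and> fdm z (\<sigma> k) l < \<epsilon>"
      using H unfolding FS.limit_metric_sequentially by auto
    have "\<bar>l (\<phi> \<circ> g j)\<bar> \<le> real m" if p: "\<phi> \<in> Lip0 z" "Lip \<phi> \<le> 1" for j \<phi>
    proof (rule ccontr)
      assume nle: "\<not> \<bar>l (\<phi> \<circ> g j)\<bar> \<le> real m"
      define \<psi> where "\<psi> = \<phi> \<circ> g j"
      have c: "\<psi> \<in> Lip0 z" unfolding \<psi>_def by (rule Lip0_comp(1)[OF p(1) g])
      define K where "K = Lip (g j)"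
      have K: "0 \<le> K" "Lip \<psi> \<le> K" unfolding K_def \<psi>_def using Lip_map_nonneg[OF g] Lip_comp_le[OF g p] by auto
      define \<epsilon> where "\<epsilon> = (\<bar>l \<psi>\<bar> - real m) / (K + 1)"
      have ep: "\<epsilon> > 0" using nle K unfolding \<epsilon>_def \<psi>_def by simp
      obtain N where N: "fdm z (\<sigma> N) l < \<epsilon>" using lim[OF ep] by blast
      have fdN: "free_dist z (\<sigma> N) l < \<epsilon>" using N fdm_eq[OF sF lF] by simp
      have "\<bar>\<sigma> N \<psi> - l \<psi>\<bar> \<le> free_dist z (\<sigma> N) l * Lip \<psi>" by (rule fd_bound(1)[OF free_dual[OF sF] free_dual[OF lF] c])
      also have "\<dots> \<le> \<epsilon> * K" using fdN K ep fd_bound(2)[OF free_dual[OF sF] free_dual[OF lF] c] Lip0_bound(2)[OF c]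
        by (intro mult_mono) auto
      also have "\<dots> < \<epsilon> * (K + 1)" using ep by simp
      also have "\<dots> = \<bar>l \<psi>\<bar> - real m" unfolding \<epsilon>_def using K by simp
      finally have 1: "\<bar>\<sigma> N \<psi> - l \<psi>\<bar> < \<bar>l \<psi>\<bar> - real m" .
      have 2: "\<bar>\<sigma> N \<psi>\<bar> \<le> real m" using sE[of N] p unfolding E_def \<psi>_def by auto
      from 1 2 show False by linarith
    qed
    then show "l \<in> E m" using lF unfolding E_def by auto
  qed
  have union: "\<Union> (range E) = free_space z"
  proof
    show "\<Union> (range E) \<subseteq> free_space z" unfolding E_def by auto
    show "free_space z \<subseteq> \<Union> (range E)"
    proof
      fix \<Lambda> assume L: "\<Lambda> \<in> free_space z"
      have LL: "\<Lambda> \<in> Lip0_dual z" by (rule free_dual[OF L])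
      have "Bseq (\<lambda>j. free_dist z (Pf z (g j) \<Lambda>) \<Lambda>)" by (rule convergent_imp_Bseq) (use conv'[OF L] in \<open>auto simp: convergent_def\<close>)
      then obtain K where K: "\<And>j. norm (free_dist z (Pf z (g j) \<Lambda>) \<Lambda>) \<le> K" unfolding Bseq_def by auto
      define m where "m = nat \<lceil>K + dual_norm z \<Lambda>\<rceil>"
      have "\<bar>\<Lambda> (\<phi> \<circ> g j)\<bar> \<le> real m" if p: "\<phi> \<in> Lip0 z" "Lip \<phi> \<le> 1" for j \<phi>
      proof -
        have PD: "Pf z (g j) \<Lambda> \<in> Lip0_dual z" by (rule P_dual[OF g LL])
        have 1: "\<bar>Pf z (g j) \<Lambda> \<phi> - \<Lambda> \<phi>\<bar> \<le> K" using fd_unit[OF PD LL p] K[of j] by simp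
        have 2: "\<bar>\<Lambda> \<phi>\<bar> \<le> dual_norm z \<Lambda>" by (rule dual_unit[OF LL p])
        have 3: "Pf z (g j) \<Lambda> \<phi> = \<Lambda> (\<phi> \<circ> g j)" using p unfolding Pf_def by simp
        have "\<bar>\<Lambda> (\<phi> \<circ> g j)\<bar> \<le> K + dual_norm z \<Lambda>" using 1 2 3 by linarith
        also have "\<dots> \<le> real m" unfolding m_def by linarith
        finally show ?thesis .
      qed
      then have "\<Lambda> \<in> E m" using L unfolding E_def by auto
      then show "\<Lambda> \<in> \<Union> (range E)" by blast
    qed
  qed
  have "\<exists>m. FS.mtopology interior_of (E m) \<noteq> {}"
  proof (rule ccontr)
    assume "\<not> ?thesis"
    then have "FS.mtopology interior_of \<Union> (range E) = {}"
      using closed by (intro FS.metric_Baire_category_alt[OF mcomplete_free]) auto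
    then have "free_space z = {}" unfolding union
      by (metis FS.topspace_mtopology interior_of_topspace)
    then show False using zero_free by blast
  qed
  then obtain m where "FS.mtopology interior_of (E m) \<noteq> {}" by blast
  then obtain \<Lambda>0 where "\<Lambda>0 \<in> FS.mtopology interior_of (E m)" by blast
  then obtain r where r: "r > 0" "FS.mball \<Lambda>0 r \<subseteq> FS.mtopology interior_of (E m)"
    using openin_interior_of[of FS.mtopology "E m"] unfolding FS.openin_mtopology by blast
  have ball: "FS.mball \<Lambda>0 r \<subseteq> E m" using r(2) interior_of_subset[of FS.mtopology "E m"] by (rule order_trans)
  have L0: "\<Lambda>0 \<in> E m" using \<open>\<Lambda>0 \<in> FS.mtopology interior_of (E m)\<close> interior_of_subset[of FS.mtopology "E m"]
    by (rule subsetD[rotated])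
  have L0F: "\<Lambda>0 \<in> free_space z" using L0 unfolding E_def by auto
  have lip: "(4 * real m / r)-lipschitz_on UNIV (g j)" for j
  proof (rule lipschitz_onI)
    show "0 \<le> 4 * real m / r" using r by simp
    fix x y :: 'a
    show "dist (g j x) (g j y) \<le> 4 * real m / r * dist x y"
    proof (cases "x = y")
      case True then show ?thesis by simp
    next
      case False
      define d where "d = dist x y"
      have dp: "d > 0" using False unfolding d_def by simp
      define c where "c = r / (2 * d)"
      have cp: "c > 0" using r dp unfolding c_def by simp
      define \<Gamma> where "\<Gamma> = (\<lambda>\<psi>. 1 * delta z x \<psi> + (-1) * delta z y \<psi>)"
      have GF: "\<Gamma> \<in> free_space z" unfolding \<Gamma>_def by (rule free_comb[OF delta_free delta_free])
      define \<Lambda>1 where "\<Lambda>1 = (\<lambda>\<psi>. 1 * \<Lambda>0 \<psi> + c * \<Gamma> \<psi>)"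
      have L1F: "\<Lambda>1 \<in> free_space z" unfolding \<Lambda>1_def by (rule free_comb[OF L0F GF])
      have "free_dist z \<Lambda>0 \<Lambda>1 \<le> c * d"
      proof (rule fd_le)
        fix \<psi> assume p: "\<psi> \<in> Lip0 z" "Lip \<psi> \<le> 1"
        have "\<bar>\<psi> x - \<psi> y\<bar> \<le> Lip \<psi> * d" unfolding d_def by (rule Lip0_bound(1)[OF p(1)])
        also have "\<dots> \<le> 1 * d" using p(2) dp by (intro mult_right_mono) auto
        finally have "\<bar>\<psi> x - \<psi> y\<bar> \<le> d" by simp
        then have "c * \<bar>\<psi> x - \<psi> y\<bar> \<le> c * d" using cp by (intro mult_left_mono) auto
        moreover have "\<bar>\<Lambda>0 \<psi> - \<Lambda>1 \<psi>\<bar> = c * \<bar>\<psi> x - \<psi> y\<bar>"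
        proof -
          have "\<Lambda>0 \<psi> - \<Lambda>1 \<psi> = - (c * (\<psi> x - \<psi> y))"
            using p unfolding \<Lambda>1_def \<Gamma>_def delta_def by (simp add: algebra_simps)
          then show ?thesis using cp by (simp add: abs_mult)
        qed
        ultimately show "\<bar>\<Lambda>0 \<psi> - \<Lambda>1 \<psi>\<bar> \<le> c * d" by simp
      qed
      also have "c * d = r / 2" unfolding c_def using dp by simp
      also have "\<dots> < r" using r by simp
      finally have "fdm z \<Lambda>0 \<Lambda>1 < r" using fdm_eq[OF L0F L1F] by simp
      then have "\<Lambda>1 \<in> E m" using ball L0F L1F by auto
      define \<phi> where "\<phi> = (\<lambda>t. dist t (g j y) - dist z (g j y))"
      have p: "\<phi> \<in> Lip0 z" "Lip \<phi> \<le> 1" unfolding \<phi>_def by (rule Lip0_dist)+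
      have c: "\<phi> \<circ> g j \<in> Lip0 z" by (rule Lip0_comp(1)[OF p(1) g])
      have 1: "\<bar>\<Lambda>1 (\<phi> \<circ> g j)\<bar> \<le> real m" using \<open>\<Lambda>1 \<in> E m\<close> p unfolding E_def by auto
      have 2: "\<bar>\<Lambda>0 (\<phi> \<circ> g j)\<bar> \<le> real m" using L0 p unfolding E_def by auto
      have 3: "\<Lambda>1 (\<phi> \<circ> g j) - \<Lambda>0 (\<phi> \<circ> g j) = c * dist (g j x) (g j y)"
        using c unfolding \<Lambda>1_def \<Gamma>_def delta_def \<phi>_def by simp
      have "c * dist (g j x) (g j y) \<le> 2 * real m" using 1 2 3 by linarith
      then have "dist (g j x) (g j y) \<le> 2 * real m / c" using cp by (simp add: field_simps)
      also have "2 * real m / c = 4 * real m / r * d" unfolding c_def using dp r by (simp add: field_simps)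
      finally show ?thesis unfolding d_def .
    qed
  qed
  show ?thesis
  proof (intro exI conjI allI)
    show "0 \<le> 4 * real m / r" using r by simp
    fix k show "Lip (f ^^ n k) \<le> 4 * real m / r" using Lip_props(2)[OF lip[of k]] unfolding g_def .
  qed
qed


theorem corollary3p7:
  fixes z :: "'a::complete_space" and f :: "'a \<Rightarrow> 'a"
  assumes "f \<in> Lip0_maps z"
  shows "rigid_on (free_space z) (free_dist z) (hat z f) \<longleftrightarrow>
    (\<exists>n::nat \<Rightarrow> nat. \<exists>C::real. strict_mono n \<and> C \<ge> 0 \<and>
       (\<forall>k. Lip (f ^^ n k) \<le> C) \<and> (\<forall>x. (\<lambda>k. (f ^^ n k) x) \<longlonglongrightarrow> x))"
proof
  assume "rigid_on (free_space z) (free_dist z) (hat z f)"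
  then obtain n where n: "strict_mono n"
    "\<forall>\<Lambda>\<in>free_space z. (\<lambda>j. free_dist z ((hat z f ^^ n j) \<Lambda>) \<Lambda>) \<longlonglongrightarrow> 0"
    unfolding rigid_on_def by blast
  obtain C where C: "C \<ge> 0" "\<forall>k. Lip (f ^^ n k) \<le> C" using rigid_bound[OF assms n(2)] by blast
  have "\<forall>x. (\<lambda>k. (f ^^ n k) x) \<longlonglongrightarrow> x" using rigid_pointwise[OF assms n(2)] by blast
  then show "\<exists>n::nat \<Rightarrow> nat. \<exists>C::real. strict_mono n \<and> C \<ge> 0 \<and>
       (\<forall>k. Lip (f ^^ n k) \<le> C) \<and> (\<forall>x. (\<lambda>k. (f ^^ n k) x) \<longlonglongrightarrow> x)"
    using n(1) C by blast
next
  assume "\<exists>n::nat \<Rightarrow> nat. \<exists>C::real. strict_mono n \<and> C \<ge> 0 \<and>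
       (\<forall>k. Lip (f ^^ n k) \<le> C) \<and> (\<forall>x. (\<lambda>k. (f ^^ n k) x) \<longlonglongrightarrow> x)"
  then obtain n C where H: "strict_mono n" "C \<ge> 0" "\<And>k. Lip (f ^^ n k) \<le> C"
    "\<And>x. (\<lambda>k. (f ^^ n k) x) \<longlonglongrightarrow> x" by blast
  show "rigid_on (free_space z) (free_dist z) (hat z f)" by (rule rigid_if[OF assms H])
qed

end
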